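(* Let $(\mathcal{S},\mathcal{R})$ be an $r$-homogeneous positive presentation. Then $(\mathcal{S},\mathcal{R})$ is $r$-complete if and only if any one of the following three conditions holds, and these three conditions are equivalent: (i) the strong $r$-cube condition holds at $u,v,w$ for all $u,v,w\in\mathcal{S}^*$; (ii) the strong $r$-cube condition holds at $s,t,r$ for all letters $s,t,r\in\mathcal{S}$; (iii) the $r$-cube condition holds at $s,t,r$ for all letters $s,t,r\in\mathcal{S}$.
   Context: A positive presentation is a pair $(\mathcal{S},\mathcal{R})$ where $\mathcal{S}$ is a nonempty set of letters and $\mathcal{R}$ is a family of relations $u=v$, i.e. unordered pairs $\{u,v\}$ of nonempty words in the free monoid $\mathcal{S}^*$. $\varepsilon$ denotes the empty word; $\equiv$ is the smallest congruence on $\mathcal{S}^*$ containing all pairs of $\mathcal{R}$. Let $\mathcal{S}^{-1}=\{s^{-1}:s\in\mathcal{S}\}$ be a disjoint copy of $\mathcal{S}$; for a word $u\in\mathcal{S}^*$, $u^{-1}$ is the word on $\mathcal{S}^{-1}$ obtained by reversing the order of the letters of $u$ and replacing each $s$ by $s^{-1}$. Right reversing: for words $\mathbf{w},\mathbf{w}'$ on $\mathcal{S}\cup\mathcal{S}^{-1}$ we write $\mathbf{w}\curvearrowright_r\mathbf{w}'$ if $\mathbf{w}'$ is obtained from $\mathbf{w}$ by a finite (possibly empty) sequence of steps, each of which either deletes a subword $u^{-1}u$ with $u\in\mathcal{S}^*$ nonempty, or replaces a subword $u^{-1}v$ with $u,v\in\mathcal{S}^*$ nonempty by a word $v'u'^{-1}$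 with $u',v'\in\mathcal{S}^*$ such that $uv'=vu'$ is a relation of $\mathcal{R}$. $(\mathcal{S},\mathcal{R})$ is $r$-complete if for all $u,v,u',v'\in\mathcal{S}^*$ with $uv'\equiv vu'$ there exist $u'',v'',w\in\mathcal{S}^*$ with $u^{-1}v\curvearrowright_r v''u''^{-1}$, $u'\equiv u''w$ and $v'\equiv v''w$. For $u,v,w\in\mathcal{S}^*$: the $r$-cube condition holds at $u,v,w$ if whenever $u^{-1}ww^{-1}v\curvearrowright_r v'u'^{-1}$ with $u',v'\in\mathcal{S}^*$, there exist $u'',v'',w''\in\mathcal{S}^*$ with $u^{-1}v\curvearrowright_r v''u''^{-1}$, $u'\equiv u''w''$ and $v'\equiv v''w''$; the strong $r$-cube condition holds at $u,v,w$ if whenever $u^{-1}ww^{-1}v\curvearrowright_r v'u'^{-1}$ with $u',v'\in\mathcal{S}^*$, we have $(uv')^{-1}(vu')\curvearrowright_r\varepsilon$. $(\mathcal{S},\mathcal{R})$ is $r$-homogeneous if there is a map $\lambda$ from $\mathcal{S}^*$ to the ordinals such that $\lambda(su)>\lambda(u)$ for all $s\in\mathcal{S}$, $u\in\mathcal{S}^*$, and $\lambda(u)=\lambda(v)$ whenever $u\equiv v$. *)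

theory Defs
  imports Main
begin

text \<open>Letters of the alphabet S are the elements of a type 'a.
  Signed letters: Pos s stands for s, Neg s for s^{-1}.\<close>
datatype 'a sletter = Pos 'a | Neg 'a

text \<open>A positive presentation: relations are pairs of nonempty words,
  read as unordered pairs.\<close>
definition positive_presentation :: "('a list \<times> 'a list) set \<Rightarrow> bool" where
  "positive_presentation R \<longleftrightarrow> (\<forall>(u, v) \<in> R. u \<noteq> [] \<and> v \<noteq> [])"

definition is_rel :: "('a list \<times> 'a list) set \<Rightarrow> 'a list \<Rightarrow> 'a list \<Rightarrow> bool" where
  "is_rel R u v \<longleftrightarrow> (u, v) \<in> R \<or> (v, u) \<in> R"

inductive pcong :: "('a list \<times> 'a list) set \<Rightarrow> 'a list \<Rightarrow> 'a list \<Rightarrow> bool"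
  for R where
  base: "is_rel R u v \<Longrightarrow> pcong R (x @ u @ y) (x @ v @ y)"
| refl: "pcong R u u"
| sym: "pcong R u v \<Longrightarrow> pcong R v u"
| trans: "pcong R u v \<Longrightarrow> pcong R v w \<Longrightarrow> pcong R u w"

definition pos :: "'a list \<Rightarrow> 'a sletter list" where
  "pos u = map Pos u"

definition neg :: "'a list \<Rightarrow> 'a sletter list" where
  "neg u = map Neg (rev u)"

inductive rstep :: "('a list \<times> 'a list) set \<Rightarrow> 'a sletter list \<Rightarrow> 'a sletter list \<Rightarrow> bool"
  for R where
  cancel: "u \<noteq> [] \<Longrightarrow> rstep R (x @ neg u @ pos u @ y) (x @ y)"
| switch: "u \<noteq> [] \<Longrightarrow> v \<noteq> [] \<Longrightarrow> is_rel R (u @ v') (v @ u') \<Longrightarrow>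
     rstep R (x @ neg u @ pos v @ y) (x @ pos v' @ neg u' @ y)"

definition rrev :: "('a list \<times> 'a list) set \<Rightarrow> 'a sletter list \<Rightarrow> 'a sletter list \<Rightarrow> bool" where
  "rrev R = (rstep R)\<^sup>*\<^sup>*"

definition r_complete :: "('a list \<times> 'a list) set \<Rightarrow> bool" where
  "r_complete R \<longleftrightarrow> (\<forall>u v u' v'. pcong R (u @ v') (v @ u') \<longrightarrow>
     (\<exists>u'' v'' w. rrev R (neg u @ pos v) (pos v'' @ neg u'') \<and>
        pcong R u' (u'' @ w) \<and> pcong R v' (v'' @ w)))"

definition r_cube :: "('a list \<times> 'a list) set \<Rightarrow> 'a list \<Rightarrow> 'a list \<Rightarrow> 'a list \<Rightarrow> bool" where
  "r_cube R u v w \<longleftrightarrow> (\<forall>u' v'. rrev R (neg u @ pos w @ neg w @ pos v) (pos v' @ neg u') \<longrightarrow>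
     (\<exists>u'' v'' w''. rrev R (neg u @ pos v) (pos v'' @ neg u'') \<and>
        pcong R u' (u'' @ w'') \<and> pcong R v' (v'' @ w'')))"

definition strong_r_cube :: "('a list \<times> 'a list) set \<Rightarrow> 'a list \<Rightarrow> 'a list \<Rightarrow> 'a list \<Rightarrow> bool" where
  "strong_r_cube R u v w \<longleftrightarrow> (\<forall>u' v'. rrev R (neg u @ pos w @ neg w @ pos v) (pos v' @ neg u') \<longrightarrow>
     rrev R (neg (u @ v') @ pos (v @ u')) [])"

text \<open>A witness of r-homogeneity: a map into a well-ordered type (standing
  for the ordinals).\<close>
definition r_homogeneous_map :: "('a list \<times> 'a list) set \<Rightarrow> ('a list \<Rightarrow> 'b::wellorder) \<Rightarrow> bool" where
  "r_homogeneous_map R lam \<longleftrightarrow> (\<forall>s u. lam (s # u) > lam u) \<and>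
     (\<forall>u v. pcong R u v \<longrightarrow> lam u = lam v)"

end

theory Submission
  imports Defs
begin

lemma pcong_ctx: "pcong R u v \<Longrightarrow> pcong R (x @ u @ y) (x @ v @ y)"
proof (induction rule: pcong.induct)
  case (base u v x' y')
  then show ?case using pcong.base[of R u v "x@x'" "y'@y"] by simp
next
  case (refl u) then show ?case by (rule pcong.refl)
next
  case (sym u v) show ?case using sym.IH by (rule pcong.sym)
next
  case (trans u v w) show ?case using trans.IH by (metis pcong.trans)
qed

lemma pcong_app_left: "pcong R u v \<Longrightarrow> pcong R (x @ u) (x @ v)"
  using pcong_ctx[of R u v x "[]"] by simp
lemma pcong_app_right: "pcong R u v \<Longrightarrow> pcong R (u @ y) (v @ y)"
  using pcong_ctx[of R u v "[]" y] by simp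
lemma pcong_cons: "pcong R u v \<Longrightarrow> pcong R (s # u) (s # v)"
  using pcong_app_left[of R u v "[s]"] by simp
lemma pcong_sym: "pcong R u v \<Longrightarrow> pcong R v u" by (rule pcong.sym)
lemma pcong_trans: "pcong R u v \<Longrightarrow> pcong R v w \<Longrightarrow> pcong R u w" by (rule pcong.trans)
lemma pcong_refl: "pcong R u u" by (rule pcong.refl)
lemma pcong_rel: "is_rel R u v \<Longrightarrow> pcong R u v"
  using pcong.base[of R u v "[]" "[]"] by simp

lemma pcong_nil:
  assumes "positive_presentation R" "pcong R x y" shows "x = [] \<longleftrightarrow> y = []"
  using assms(2)
proof (induction rule: pcong.induct)
  case (base u v x y)
  then have "u \<noteq> []" "v \<noteq> []" using assms(1) unfolding positive_presentation_def is_rel_def by auto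
  then show ?case by simp
qed auto

lemma neg_simps[simp]: "neg [] = []" "neg (s # u) = neg u @ [Neg s]" "neg (a @ b) = neg b @ neg a"
  by (auto simp: neg_def)
lemma pos_simps[simp]: "pos [] = []" "pos (s # u) = Pos s # pos u" "pos (a @ b) = pos a @ pos b"
  by (auto simp: pos_def)

section \<open>Soundness semantics\<close>

fun cs :: "('a list \<times> 'a list) set \<Rightarrow> 'a sletter list \<Rightarrow> 'a list \<Rightarrow> 'a list \<Rightarrow> bool" where
  "cs R [] p q = pcong R p q"
| "cs R (Pos s # w) p q = (\<exists>q1. cs R w p q1 \<and> pcong R q (s # q1))"
| "cs R (Neg s # w) p q = cs R w p (s # q)"

lemma cs_cong: "cs R w p q \<Longrightarrow> pcong R q q' \<Longrightarrow> cs R w p q'"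
proof (induction w arbitrary: q q')
  case Nil then show ?case by (auto intro: pcong_trans)
next
  case (Cons a w)
  then show ?case
  proof (cases a)
    case (Pos s) then show ?thesis using Cons by (meson cs.simps(2) pcong_sym pcong_trans)
  next
    case (Neg s) then show ?thesis using Cons by (auto intro: pcong_cons)
  qed
qed

lemma cs_pos: "cs R (pos v @ w) p q = (\<exists>q1. cs R w p q1 \<and> pcong R q (v @ q1))"
proof (induction v arbitrary: q)
  case Nil
  have "cs R w p q" if "cs R w p q1" "pcong R q q1" for q1
    using cs_cong[OF that(1) pcong_sym[OF that(2)]] .
  then show ?case by (auto intro: pcong_refl)
next
  case (Cons s v)
  show ?case
  proof
    assume "cs R (pos (s # v) @ w) p q"
    then obtain q1 q2 where "cs R w p q2" "pcong R q1 (v @ q2)" "pcong R q (s # q1)"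
      using Cons by auto
    then have "cs R w p q2" "pcong R q (s # v @ q2)"
    proof -
      assume a: "cs R w p q2" "pcong R q1 (v @ q2)" "pcong R q (s # q1)"
      show "cs R w p q2" by (rule a(1))
      show "pcong R q (s # v @ q2)" using pcong_trans[OF a(3) pcong_cons[OF a(2)]] .
    qed
    then show "\<exists>q1. cs R w p q1 \<and> pcong R q ((s # v) @ q1)" by auto
  next
    assume "\<exists>q1. cs R w p q1 \<and> pcong R q ((s # v) @ q1)"
    then obtain q2 where "cs R w p q2" "pcong R q (s # v @ q2)" by auto
    then show "cs R (pos (s # v) @ w) p q" using Cons by (auto intro: pcong_refl)
  qed
qed

lemma cs_neg: "cs R (neg u @ w) p q = cs R w p (u @ q)"
  by (induction u arbitrary: w q) auto

lemma cs_ctx: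
  assumes "\<And>q. cs R (M' @ y) p q \<Longrightarrow> cs R (M @ y) p q"
  shows "cs R (x @ M' @ y) p q \<Longrightarrow> cs R (x @ M @ y) p q"
proof (induction x arbitrary: q)
  case Nil then show ?case using assms by simp
next
  case (Cons a x)
  then show ?case by (cases a) auto
qed

lemma cs_step: "rstep R w w' \<Longrightarrow> cs R w' p q \<Longrightarrow> cs R w p q"
proof (induction rule: rstep.induct)
  case (cancel u x y)
  have "cs R ([] @ y) p q \<Longrightarrow> cs R ((neg u @ pos u) @ y) p q" for q
    by (simp add: cs_neg cs_pos) (blast intro: pcong_refl)
  from cs_ctx[of R "[]" y p "neg u @ pos u" x q, OF this] cancel show ?case by simp
next
  case (switch u v v' u' x y)
  have "cs R ((pos v' @ neg u') @ y) p q \<Longrightarrow> cs R ((neg u @ pos v) @ y) p q" for q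
  proof -
    assume "cs R ((pos v' @ neg u') @ y) p q"
    then obtain q1 where "cs R y p (u' @ q1)" "pcong R q (v' @ q1)"
      by (auto simp: cs_neg cs_pos)
    moreover have "pcong R (u @ q) (v @ u' @ q1)"
    proof -
      have "pcong R (u @ q) (u @ v' @ q1)" using \<open>pcong R q (v' @ q1)\<close> by (rule pcong_app_left)
      moreover have "pcong R ((u @ v') @ q1) ((v @ u') @ q1)"
        using switch(3) by (intro pcong_app_right pcong_rel)
      ultimately show ?thesis by (auto intro: pcong_trans)
    qed
    ultimately show ?thesis by (auto simp: cs_neg cs_pos)
  qed
  from cs_ctx[of R "pos v' @ neg u'" y p "neg u @ pos v" x q, OF this] switch show ?case by simp
qed

lemma cs_rrev: "rrev R w w' \<Longrightarrow> cs R w' p q \<Longrightarrow> cs R w p q"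
  unfolding rrev_def
proof (induction rule: rtranclp_induct)
  case base then show ?case .
next
  case (step y z) then show ?case using cs_step by blast
qed

lemma sound: "rrev R (neg u @ pos v) (pos v' @ neg u') \<Longrightarrow> pcong R (u @ v') (v @ u')"
proof -
  assume h: "rrev R (neg u @ pos v) (pos v' @ neg u')"
  have "cs R (pos v' @ neg u') u' v'"
    using cs_neg[of R u' "[]" u' "[]"] by (simp add: cs_pos) (metis append_Nil2 pcong_refl)
  then have "cs R (neg u @ pos v) u' v'" using h cs_rrev by blast
  then obtain q1 where "pcong R u' q1" "pcong R (u @ v') (v @ q1)"
    using cs_neg[of R u "pos v" u' v'] cs_pos[of R v "[]" u'] by auto
  then show ?thesis by (meson pcong_app_left pcong_sym pcong_trans)
qed

lemma sound4: "rrev R (neg u @ pos w @ neg w @ pos v) (pos v' @ neg u') \<Longrightarrow> pcong R (u @ v') (v @ u')"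
proof -
  assume h: "rrev R (neg u @ pos w @ neg w @ pos v) (pos v' @ neg u')"
  have "cs R (pos v' @ neg u') u' v'"
    using cs_neg[of R u' "[]" u' "[]"] by (simp add: cs_pos) (metis append_Nil2 pcong_refl)
  then have "cs R (neg u @ pos w @ neg w @ pos v) u' v'" using h cs_rrev by blast
  then obtain q1 q2 where "pcong R u' q2" "pcong R (w @ q1) (v @ q2)" "pcong R (u @ v') (w @ q1)"
    using cs_neg[of R u] cs_neg[of R w] cs_pos[of R w] cs_pos[of R v "[]" u'] by auto
  then show ?thesis by (meson pcong_app_left pcong_sym pcong_trans)
qed


lemma rstep_ctx: "rstep R w w' \<Longrightarrow> rstep R (x @ w @ y) (x @ w' @ y)"
proof (induction rule: rstep.induct)
  case (cancel u x' y')
  then show ?case using rstep.cancel[of u R "x @ x'" "y' @ y"] by simp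
next
  case (switch u v v' u' x' y')
  then show ?case using rstep.switch[of u v R v' u' "x @ x'" "y' @ y"] by simp
qed

lemma rrev_ctx: "rrev R w w' \<Longrightarrow> rrev R (x @ w @ y) (x @ w' @ y)"
  unfolding rrev_def
proof (induction rule: rtranclp_induct)
  case base then show ?case by simp
next
  case (step a b) then show ?case using rstep_ctx by (metis rtranclp.rtrancl_into_rtrancl)
qed

lemma rrev_trans: "rrev R a b \<Longrightarrow> rrev R b c \<Longrightarrow> rrev R a c"
  unfolding rrev_def by simp

lemma rrev_refl: "rrev R a a"
  unfolding rrev_def by simp

lemma rrev_step: "rstep R a b \<Longrightarrow> rrev R a b"
  unfolding rrev_def by simp

lemma rrev_cancel1: "rrev R [Neg s, Pos s] []"
  using rrev_step[OF rstep.cancel[of "[s]" R "[]" "[]"]] by (simp add: neg_def pos_def)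

definition step1 :: "('a list \<times> 'a list) set \<Rightarrow> 'a list \<Rightarrow> 'a list \<Rightarrow> bool" where
  "step1 R x y \<longleftrightarrow> (\<exists>p a b q. is_rel R a b \<and> x = p @ a @ q \<and> y = p @ b @ q)"

lemma step1_sym: "step1 R x y \<Longrightarrow> step1 R y x"
  unfolding step1_def is_rel_def by blast

lemma step1_pcong: "step1 R x y \<Longrightarrow> pcong R x y"
  unfolding step1_def using pcong.base by blast

lemma chain_sym: "(step1 R)\<^sup>*\<^sup>* x y \<Longrightarrow> (step1 R)\<^sup>*\<^sup>* y x"
proof (induction rule: rtranclp_induct)
  case base then show ?case by simp
next
  case (step y z) then show ?case
    using converse_rtranclp_into_rtranclp[of "step1 R" z y x, OF step1_sym[OF step.hyps(2)]] by blast
qed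

lemma pcong_chain: "pcong R x y \<Longrightarrow> (step1 R)\<^sup>*\<^sup>* x y"
proof (induction rule: pcong.induct)
  case (base u v x y)
  then show ?case unfolding step1_def by (intro r_into_rtranclp) blast
next
  case (refl u) then show ?case by simp
next
  case (sym u v) then show ?case using chain_sym by blast
next
  case (trans u v w) then show ?case by simp
qed

lemma chain_pcong: "(step1 R)\<^sup>*\<^sup>* x y \<Longrightarrow> pcong R x y"
proof (induction rule: rtranclp_induct)
  case base then show ?case by (rule pcong_refl)
next
  case (step y z) then show ?case using step1_pcong pcong_trans by blast
qed

section \<open>Completeness from the cube condition\<close>

definition good :: "('a list \<times> 'a list) set \<Rightarrow> 'a list \<Rightarrow> 'a list \<Rightarrow> 'a list \<Rightarrow> 'a list \<Rightarrow> bool" where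
  "good R u v u' v' \<longleftrightarrow> (\<exists>u'' v'' w. rrev R (neg u @ pos v) (pos v'' @ neg u'') \<and>
        pcong R u' (u'' @ w) \<and> pcong R v' (v'' @ w))"

lemma onestep_letter:
  assumes pp: "positive_presentation R" and st: "step1 R (r # z) (r' # z')"
  shows "good R [r] [r'] z' z"
proof -
  obtain p a b q where rel: "is_rel R a b" and e1: "r # z = p @ a @ q" and e2: "r' # z' = p @ b @ q"
    using st unfolding step1_def by blast
  have ne: "a \<noteq> []" "b \<noteq> []" using rel pp unfolding is_rel_def positive_presentation_def by auto
  show ?thesis
  proof (cases p)
    case Nil
    obtain a2 where a: "a = r # a2" and z: "z = a2 @ q" using e1 ne Nil by (cases a) auto
    obtain b2 where b: "b = r' # b2" and z': "z' = b2 @ q" using e2 ne Nil by (cases b) auto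
    have "rstep R ([] @ neg [r] @ pos [r'] @ []) ([] @ pos a2 @ neg b2 @ [])"
      by (rule rstep.switch) (use rel a b in auto)
    then have "rrev R (neg [r] @ pos [r']) (pos a2 @ neg b2)" using rrev_step by simp
    then show ?thesis unfolding good_def using z z' pcong_refl by blast
  next
    case (Cons p0 p1)
    have rr: "r = p0" "r' = p0" and z: "z = p1 @ a @ q" and z': "z' = p1 @ b @ q"
      using e1 e2 Cons by auto
    have "rrev R (neg [r] @ pos [r']) (pos [] @ neg [])" using rrev_cancel1 rr by simp
    moreover have "pcong R z' ([] @ z)" using z z' pcong_ctx[OF pcong_rel[of R b a]] rel
      unfolding is_rel_def by auto
    ultimately show ?thesis unfolding good_def using pcong_refl by fastforce
  qed
qed

lemma main_complete:
  fixes lam :: "'a list \<Rightarrow> 'b::wellorder"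
  assumes pp: "positive_presentation R" and hl: "r_homogeneous_map R lam"
    and cube: "\<forall>s t r. r_cube R [s] [t] [r]"
  shows "pcong R (u @ v') (v @ u') \<Longrightarrow> good R u v u' v'"
proof -
  have lam_cong: "lam x = lam y" if "pcong R x y" for x y using hl that unfolding r_homogeneous_map_def by blast
  have lam_cons: "lam x < lam (s # x)" for s x using hl unfolding r_homogeneous_map_def by blast
  have lam_app: "lam x \<le> lam (a @ x)" for a x
  proof (induction a)
    case Nil then show ?case by simp
  next
    case (Cons s a) then show ?case using lam_cons[of "a @ x" s] by simp
  qed
  have "\<forall>u v u' v'. lam (u @ v') = \<alpha> \<longrightarrow> pcong R (u @ v') (v @ u') \<longrightarrow> good R u v u' v'" for \<alpha>
  proof (induction \<alpha> rule: less_induct)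
    case (less \<alpha>)
    have IH: "\<And>u v u' v'. lam (u @ v') < \<alpha> \<Longrightarrow> pcong R (u @ v') (v @ u') \<Longrightarrow> good R u v u' v'"
      using less by blast
    have letter: "good R [s] [t] y x" if lx: "lam (s # x) = \<alpha>" and pc: "pcong R (s # x) (t # y)" for s x t y
    proof -
      have ch: "(step1 R)\<^sup>*\<^sup>* (s # x) (t # y)" using pc by (rule pcong_chain)
      have "\<forall>r z. w = r # z \<longrightarrow> good R [s] [r] z x" if "(step1 R)\<^sup>*\<^sup>* (s # x) w" for w
        using that
      proof (induction rule: rtranclp_induct)
        case base
        show ?case
        proof (intro allI impI)
          fix r z assume "s # x = r # z"
          then have "r = s" "z = x" by auto
          moreover have "rrev R (neg [s] @ pos [s]) (pos [] @ neg [])" using rrev_cancel1 by simp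
          ultimately show "good R [s] [r] z x" unfolding good_def using pcong_refl by fastforce
        qed
      next
        case (step y w)
        show ?case
        proof (intro allI impI)
          fix r' z' assume w: "w = r' # z'"
          have pcy: "pcong R (s # x) y" using step.hyps(1) chain_pcong by blast
          then have "y \<noteq> []" using pcong_nil[OF pp] by blast
          then obtain r z where y: "y = r # z" by (cases y) auto
          from step.IH y obtain b a z1 where
            A: "rrev R (neg [s] @ pos [r]) (pos a @ neg b)" "pcong R z (b @ z1)" "pcong R x (a @ z1)"
            unfolding good_def by blast
          from onestep_letter[OF pp step.hyps(2)[unfolded y w]] obtain d c z2 where
            B: "rrev R (neg [r] @ pos [r']) (pos c @ neg d)" "pcong R z' (d @ z2)" "pcong R z (c @ z2)"
            unfolding good_def by blast
          have lz: "lam z < \<alpha>" using lam_cons[of z r] lam_cong[OF pcy] lx y by simp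
          have pbc: "pcong R (b @ z1) (c @ z2)" using A B by (meson pcong_sym pcong_trans)
          have "lam (b @ z1) < \<alpha>" using lz lam_cong[OF A(2)] by simp
          from IH[OF this pbc] obtain f e z3 where
            C: "rrev R (neg b @ pos c) (pos e @ neg f)" "pcong R z2 (f @ z3)" "pcong R z1 (e @ z3)"
            unfolding good_def by blast
          have D1: "rrev R (neg [s] @ pos [r] @ neg [r] @ pos [r']) (pos a @ neg b @ neg [r] @ pos [r'])"
            using rrev_ctx[OF A(1), of "[]" "neg [r] @ pos [r']"] by simp
          have D2: "rrev R (pos a @ neg b @ neg [r] @ pos [r']) (pos a @ neg b @ pos c @ neg d)"
            using rrev_ctx[OF B(1), of "pos a @ neg b" "[]"] by simp
          have D3: "rrev R (pos a @ neg b @ pos c @ neg d) (pos a @ pos e @ neg f @ neg d)"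
            using rrev_ctx[OF C(1), of "pos a" "neg d"] by simp
          have D: "rrev R (neg [s] @ pos [r] @ neg [r] @ pos [r']) (pos (a @ e) @ neg (d @ f))"
            using rrev_trans[OF D1 rrev_trans[OF D2 D3]] by simp
          from cube have "r_cube R [s] [r'] [r]" by blast
          with D obtain h g ww where
            E: "rrev R (neg [s] @ pos [r']) (pos g @ neg h)" "pcong R (d @ f) (h @ ww)" "pcong R (a @ e) (g @ ww)"
            unfolding r_cube_def by blast
          have "pcong R z' (h @ ww @ z3)"
          proof -
            have "pcong R z' (d @ f @ z3)" using B(2) pcong_app_left[OF C(2), of d] pcong_trans by blast
            moreover have "pcong R ((d @ f) @ z3) ((h @ ww) @ z3)" using pcong_app_right[OF E(2)] .
            ultimately show ?thesis using pcong_trans by fastforce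
          qed
          moreover have "pcong R x (g @ ww @ z3)"
          proof -
            have "pcong R x (a @ e @ z3)" using A(3) pcong_app_left[OF C(3), of a] pcong_trans by blast
            moreover have "pcong R ((a @ e) @ z3) ((g @ ww) @ z3)" using pcong_app_right[OF E(3)] .
            ultimately show ?thesis using pcong_trans by fastforce
          qed
          ultimately show "good R [s] [r'] z' x" unfolding good_def using E(1) by blast
        qed
      qed
      then show ?thesis using ch by blast
    qed
    show ?case
    proof (intro allI impI)
      fix u v u' v' assume l: "lam (u @ v') = \<alpha>" and pc: "pcong R (u @ v') (v @ u')"
      show "good R u v u' v'"
      proof (cases u)
        case Nil
        have "rrev R (neg u @ pos v) (pos v @ neg [])" using Nil rrev_refl by simp
        then show ?thesis unfolding good_def using pc Nil pcong_refl by fastforce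
      next
        case (Cons s u1)
        show ?thesis
        proof (cases v)
          case Nil
          have "rrev R (neg u @ pos v) (pos [] @ neg u)" using Nil rrev_refl by simp
          then show ?thesis unfolding good_def using pc Nil pcong_refl pcong_sym by fastforce
        next
          case (Cons t v1)
          have "good R [s] [t] (v1 @ u') (u1 @ v')"
            using letter[of s "u1 @ v'" t "v1 @ u'"] l pc \<open>u = s # u1\<close> Cons by simp
          then obtain b a z where
            A: "rrev R (neg [s] @ pos [t]) (pos a @ neg b)" "pcong R (v1 @ u') (b @ z)" "pcong R (u1 @ v') (a @ z)"
            unfolding good_def by blast
          have l1: "lam (u1 @ v') < \<alpha>" using l \<open>u = s # u1\<close> lam_cons[of "u1 @ v'" s] by simp
          from IH[OF l1 A(3)] obtain d c z' where
            B: "rrev R (neg u1 @ pos a) (pos c @ neg d)" "pcong R z (d @ z')" "pcong R v' (c @ z')"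
            unfolding good_def by blast
          have l2: "lam (b @ z) < \<alpha>"
          proof -
            have "lam (b @ z) = lam (v1 @ u')" using lam_cong[OF A(2)] by simp
            also have "\<dots> < lam (t # v1 @ u')" by (rule lam_cons)
            also have "\<dots> = lam (u @ v')" using lam_cong[OF pc] Cons by simp
            finally show ?thesis using l by simp
          qed
          from IH[OF l2 pcong_sym[OF A(2)]] obtain f e z'' where
            C: "rrev R (neg b @ pos v1) (pos e @ neg f)" "pcong R u' (f @ z'')" "pcong R z (e @ z'')"
            unfolding good_def by blast
          have l3: "lam (d @ z') < \<alpha>"
          proof -
            have "lam (d @ z') = lam z" using lam_cong[OF B(2)] by simp
            also have "\<dots> \<le> lam (a @ z)" by (rule lam_app)
            also have "\<dots> = lam (u1 @ v')" using lam_cong[OF A(3)] by simp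
            finally show ?thesis using l1 by simp
          qed
          have pde: "pcong R (d @ z') (e @ z'')" using B(2) C(3) by (meson pcong_sym pcong_trans)
          from IH[OF l3 pde] obtain h g z3 where
            D: "rrev R (neg d @ pos e) (pos g @ neg h)" "pcong R z'' (h @ z3)" "pcong R z' (g @ z3)"
            unfolding good_def by blast
          have R1: "rrev R (neg u @ pos v) (neg u1 @ pos a @ neg b @ pos v1)"
            using rrev_ctx[OF A(1), of "neg u1" "pos v1"] \<open>u = s # u1\<close> Cons by simp
          have R2: "rrev R (neg u1 @ pos a @ neg b @ pos v1) (pos c @ neg d @ neg b @ pos v1)"
            using rrev_ctx[OF B(1), of "[]" "neg b @ pos v1"] by simp
          have R3: "rrev R (pos c @ neg d @ neg b @ pos v1) (pos c @ neg d @ pos e @ neg f)"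
            using rrev_ctx[OF C(1), of "pos c @ neg d" "[]"] by simp
          have R4: "rrev R (pos c @ neg d @ pos e @ neg f) (pos c @ pos g @ neg h @ neg f)"
            using rrev_ctx[OF D(1), of "pos c" "neg f"] by simp
          have RR: "rrev R (neg u @ pos v) (pos (c @ g) @ neg (f @ h))"
            using rrev_trans[OF R1 rrev_trans[OF R2 rrev_trans[OF R3 R4]]] by simp
          have "pcong R u' ((f @ h) @ z3)"
            using C(2) pcong_app_left[OF D(2), of f] pcong_trans by fastforce
          moreover have "pcong R v' ((c @ g) @ z3)"
            using B(3) pcong_app_left[OF D(3), of c] pcong_trans by fastforce
          ultimately show ?thesis unfolding good_def using RR by blast
        qed
      qed
    qed
  qed
  then show "pcong R (u @ v') (v @ u') \<Longrightarrow> good R u v u' v'" by blast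
qed


section \<open>First step analysis\<close>

lemma decomp:
  assumes e: "x @ neg u @ pos v @ y = neg A @ pos B" and nu: "u \<noteq> []" and nv: "v \<noteq> []"
  shows "\<exists>A' B'. A = u @ A' \<and> B = v @ B' \<and> x = neg A' \<and> y = pos B'"
proof -
  have e': "(x @ neg u) @ (pos v @ y) = neg A @ pos B" using e by simp
  have lastneg: "last (x @ neg u) = Neg (hd u)" using nu by (cases u) (auto simp: neg_def)
  have hdpos: "hd (pos v @ y) = Pos (hd v)" using nv by (cases v) (auto simp: pos_def)
  have split: "x @ neg u = neg A \<and> pos v @ y = pos B"
  proof -
    obtain us where
      c0: "(x @ neg u = neg A @ us \<and> us @ (pos v @ y) = pos B) \<or> ((x @ neg u) @ us = neg A \<and> pos v @ y = us @ pos B)"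
      using append_eq_append_conv2[THEN iffD1, OF e'] by (elim exE) (rule that)
    then have c: "(x @ neg u = neg A @ us \<and> us @ pos v @ y = pos B) \<or> (x @ neg u @ us = neg A \<and> pos v @ y = us @ pos B)"
      by simp
    then show ?thesis
    proof
      assume h: "x @ neg u = neg A @ us \<and> us @ pos v @ y = pos B"
      have "us = []"
      proof (rule ccontr)
        assume "us \<noteq> []"
        from h have "map Pos B = us @ (pos v @ y)" unfolding pos_def by simp
        then obtain B1 B2 where "B = B1 @ B2" "us = map Pos B1" "pos v @ y = map Pos B2"
          unfolding map_eq_append_conv by (elim exE conjE) (rule that)
        then have "\<exists>b. last us = Pos b" using \<open>us \<noteq> []\<close> by (auto simp: last_map)
        moreover have "last us = last (x @ neg u)" using h \<open>us \<noteq> []\<close> by (metis last_appendR)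
        ultimately show False using lastneg by simp
      qed
      then show ?thesis using h by simp
    next
      assume h: "x @ neg u @ us = neg A \<and> pos v @ y = us @ pos B"
      have "us = []"
      proof (rule ccontr)
        assume "us \<noteq> []"
        from h have "map Neg (rev A) = (x @ neg u) @ us" unfolding neg_def by simp
        then obtain A1 A2 where "rev A = A1 @ A2" "x @ neg u = map Neg A1" "us = map Neg A2"
          unfolding map_eq_append_conv by (elim exE conjE) (rule that)
        then have "\<exists>b. hd us = Neg b" using \<open>us \<noteq> []\<close> by (cases A2) auto
        moreover have "hd us = hd (pos v @ y)" using h \<open>us \<noteq> []\<close> by simp
        ultimately show False using hdpos by simp
      qed
      then show ?thesis using h by simp
    qed
  qed
  from split have "map Neg (rev A) = x @ map Neg (rev u)" unfolding neg_def by simp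
  then obtain r1 r2 where r: "rev A = r1 @ r2" "x = map Neg r1" "map Neg (rev u) = map Neg r2"
    by (auto simp: map_eq_append_conv)
  have "inj Neg" "inj Pos" by (auto simp: inj_def)
  have "r2 = rev u" using r(3) inj_map_eq_map[OF \<open>inj Neg\<close>] by metis
  then have "rev A = r1 @ rev u" using r by simp
  then have "A = u @ rev r1" by (metis rev_append rev_rev_ident)
  then have A: "A = u @ rev r1" "x = neg (rev r1)" using r by (auto simp: neg_def)
  from split have "map Pos B = map Pos v @ y" unfolding pos_def by simp
  then obtain b1 b2 where b: "B = b1 @ b2" "map Pos v = map Pos b1" "y = map Pos b2"
    by (auto simp: map_eq_append_conv)
  have "b1 = v" using b(2) inj_map_eq_map[OF \<open>inj Pos\<close>] by metis
  then have "B = v @ b2" "y = pos b2" using b by (auto simp: pos_def)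
  then show ?thesis using A by blast
qed

lemma strong_to_cube:
  assumes st: "strong_r_cube R [s] [t] [r]"
  shows "r_cube R [s] [t] [r]"
  unfolding r_cube_def
proof (intro allI impI)
  fix U V assume h: "rrev R (neg [s] @ pos [r] @ neg [r] @ pos [t]) (pos V @ neg U)"
  then have "rrev R (neg ([s] @ V) @ pos ([t] @ U)) []" using st unfolding strong_r_cube_def by blast
  then have "(rstep R)\<^sup>*\<^sup>* (neg (s # V) @ pos (t # U)) []" unfolding rrev_def by simp
  then obtain W1 where st1: "rstep R (neg (s # V) @ pos (t # U)) W1" and st2: "rrev R W1 []"
    unfolding rrev_def by (cases rule: converse_rtranclpE) auto
  show "\<exists>u'' v'' w''. rrev R (neg [s] @ pos [t]) (pos v'' @ neg u'') \<and> pcong R U (u'' @ w'') \<and> pcong R V (v'' @ w'')"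
    using st1
  proof (cases rule: rstep.cases)
    case (cancel u x y)
    from decomp[of x u u y "s # V" "t # U"] cancel obtain A' B' where
      d: "s # V = u @ A'" "t # U = u @ B'" "x = neg A'" "y = pos B'" by auto
    obtain x2 where u: "u = s # x2" using d(1) cancel(3) by (cases u) auto
    have ts: "t = s" "U = x2 @ B'" "V = x2 @ A'" using d u by auto
    have "rrev R (neg A' @ pos B') (pos [] @ neg [])" using st2 cancel d by simp
    then have "pcong R A' B'" using sound[of R A' B' "[]" "[]"] by simp
    then have "pcong R U ([] @ V)" using ts pcong_app_left pcong_sym by fastforce
    moreover have "rrev R (neg [s] @ pos [t]) (pos [] @ neg [])" using rrev_cancel1 ts by simp
    ultimately show ?thesis using pcong_refl by fastforce
  next
    case (switch u v v1 u1 x y)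
    from decomp[of x u v y "s # V" "t # U"] switch obtain A' B' where
      d: "s # V = u @ A'" "t # U = v @ B'" "x = neg A'" "y = pos B'" by auto
    obtain x2 where u: "u = s # x2" using d(1) switch(3) by (cases u) auto
    obtain y2 where v: "v = t # y2" using d(2) switch(4) by (cases v) auto
    have UV: "U = y2 @ B'" "V = x2 @ A'" using d u v by auto
    have "cs R [] [] []" by (simp add: pcong_refl)
    then have "cs R (neg A' @ pos v1 @ neg u1 @ pos B') [] []"
      using cs_rrev[of R "neg A' @ pos v1 @ neg u1 @ pos B'" "[]" "[]" "[]"] st2 switch d by simp
    then obtain q1 q2 where q: "pcong R [] q2" "pcong R (u1 @ q1) (B' @ q2)" "pcong R A' (v1 @ q1)"
      using cs_neg[of R A'] cs_neg[of R u1] cs_pos[of R v1] cs_pos[of R B' "[]"] by auto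
    have P1: "pcong R (B' @ []) (B' @ q2)" using pcong_app_left[OF q(1)] .
    have PB: "pcong R B' (u1 @ q1)" using pcong_trans[OF P1[simplified] pcong_sym[OF q(2)]] .
    have rel: "is_rel R ([s] @ x2 @ v1) ([t] @ y2 @ u1)" using switch(5) u v by simp
    have "rstep R ([] @ neg [s] @ pos [t] @ []) ([] @ pos (x2 @ v1) @ neg (y2 @ u1) @ [])"
      using rstep.switch[of "[s]" "[t]" R "x2 @ v1" "y2 @ u1" "[]" "[]"] rel by simp
    then have "rrev R (neg [s] @ pos [t]) (pos (x2 @ v1) @ neg (y2 @ u1))" using rrev_step by simp
    moreover have "pcong R U ((y2 @ u1) @ q1)" using UV(1) pcong_app_left[OF PB, of y2] by simp
    moreover have "pcong R V ((x2 @ v1) @ q1)" using UV(2) pcong_app_left[OF q(3), of x2] by simp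
    ultimately show ?thesis by blast
  qed
qed


theorem proposition4p4:
  fixes R :: "('a list \<times> 'a list) set"
    and lam :: "'a list \<Rightarrow> 'b::wellorder"
  assumes "positive_presentation R"
    and "r_homogeneous_map R lam"
  shows "(r_complete R \<longleftrightarrow> (\<forall>u v w. strong_r_cube R u v w))
    \<and> ((\<forall>u v w. strong_r_cube R u v w) \<longleftrightarrow> (\<forall>s t r. strong_r_cube R [s] [t] [r]))
    \<and> ((\<forall>s t r. strong_r_cube R [s] [t] [r]) \<longleftrightarrow> (\<forall>s t r. r_cube R [s] [t] [r]))"
proof -
  have c2s: "\<forall>u v w. strong_r_cube R u v w" if c: "r_complete R"
    unfolding strong_r_cube_def
  proof (intro allI impI)
    fix u v w u' v'
    assume "rrev R (neg u @ pos w @ neg w @ pos v) (pos v' @ neg u')"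
    then have "pcong R ((u @ v') @ []) ((v @ u') @ [])" using sound4 by simp
    then obtain u'' v'' ww where h: "rrev R (neg (u @ v') @ pos (v @ u')) (pos v'' @ neg u'')"
      "pcong R [] (u'' @ ww)" "pcong R [] (v'' @ ww)"
      using c unfolding r_complete_def by blast
    have "u'' = []" "v'' = []" using pcong_nil[OF assms(1) h(2)] pcong_nil[OF assms(1) h(3)] by auto
    then show "rrev R (neg (u @ v') @ pos (v @ u')) []" using h(1) by simp
  qed
  have l2c: "\<forall>s t r. r_cube R [s] [t] [r]" if "\<forall>s t r. strong_r_cube R [s] [t] [r]"
    using that by (intro allI strong_to_cube) blast
  have c2comp: "r_complete R" if "\<forall>s t r. r_cube R [s] [t] [r]"
    unfolding r_complete_def
    using main_complete[OF assms that] unfolding good_def by blast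
  show ?thesis using c2s l2c c2comp by blast
qed

end
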